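(* Let $G=(V,E)$ be a graph with $n=|V|$. For all $i\in[0,n]$ and $v\in V$, we have $D_{i,v}=S_{i,v}$, where $S_{i,v}=\{v\}\cup\bigcup\{M_{v,w}\mid w\in V,\ p_v([w]_v)=i\}$.
   Context: Graphs are finite, simple, undirected, with nonempty vertex set. A module of $G=(V,E)$ is a nonempty $M\subseteq V$ such that every $u\in V\setminus M$ is adjacent either to all or to none of the vertices of $M$. For $|V|>1$ and $v\in V$, $D_G(v)$ is: the connected component of $G$ containing $v$ if $G$ is disconnected; otherwise the connected component of $\overline{G}$ containing $v$ if $\overline{G}$ is disconnected; otherwise (both connected, in which case the maximal proper modules of $G$ partition $V$) the maximal proper module of $G$ containing $v$; if $|V|=1$, $D_G(v)=\{v\}$. Define $D_{0,v}=V$ and $D_{i+1,v}=D_{G[D_{i,v}]}(v)$ for $i\in[0,n-1]$. For $v,w\in V$, $M_{v,w}$ is the intersection of all modules of $G$ containing $v$ and $w$. Define $w_1\prec_v w_2$ iff $M_{v,w_2}\subsetneq M_{v,w_1}$; $\prec_v$ is a strict weak order, so incomparability $\sim_v$ w.r.t. $\prec_v$ is an equivalence relation on $V$ with classes $[w]_v$, and $\prec_v$ induces a strict linear order on $V/{\sim_v}$. $p_v\colon V/{\sim_v}\to\mathbb{N}$ assigns to each class its position in this strict linear order, the smallest class receiving $0$. *)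

theory Defs
  imports Main
begin

text \<open>A finite simple undirected graph with vertex set V and adjacency relation E.
  Induced subgraphs G[S] are represented by the pair (S, E): all notions below are
  relativised to the given vertex set.\<close>

definition graph :: "'a set \<Rightarrow> ('a \<Rightarrow> 'a \<Rightarrow> bool) \<Rightarrow> bool" where
  "graph V E \<longleftrightarrow> finite V \<and> V \<noteq> {} \<and> (\<forall>u w. E u w \<longrightarrow> u \<in> V \<and> w \<in> V)
     \<and> (\<forall>u w. E u w \<longrightarrow> E w u) \<and> (\<forall>u. \<not> E u u)"

definition is_module :: "'a set \<Rightarrow> ('a \<Rightarrow> 'a \<Rightarrow> bool) \<Rightarrow> 'a set \<Rightarrow> bool" where
  "is_module V E M \<longleftrightarrow> M \<noteq> {} \<and> M \<subseteq> V \<and>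
     (\<forall>u \<in> V - M. (\<forall>m \<in> M. E u m) \<or> (\<forall>m \<in> M. \<not> E u m))"

definition max_proper_module :: "'a set \<Rightarrow> ('a \<Rightarrow> 'a \<Rightarrow> bool) \<Rightarrow> 'a set \<Rightarrow> bool" where
  "max_proper_module V E M \<longleftrightarrow> is_module V E M \<and> M \<subset> V \<and>
     (\<forall>M'. is_module V E M' \<and> M' \<subset> V \<and> M \<subseteq> M' \<longrightarrow> M' = M)"

definition adj_in :: "'a set \<Rightarrow> ('a \<Rightarrow> 'a \<Rightarrow> bool) \<Rightarrow> 'a \<Rightarrow> 'a \<Rightarrow> bool" where
  "adj_in V E u w \<longleftrightarrow> u \<in> V \<and> w \<in> V \<and> E u w"

definition compl_adj :: "'a set \<Rightarrow> ('a \<Rightarrow> 'a \<Rightarrow> bool) \<Rightarrow> 'a \<Rightarrow> 'a \<Rightarrow> bool" where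
  "compl_adj V E u w \<longleftrightarrow> u \<in> V \<and> w \<in> V \<and> u \<noteq> w \<and> \<not> E u w"

definition component :: "'a set \<Rightarrow> ('a \<Rightarrow> 'a \<Rightarrow> bool) \<Rightarrow> 'a \<Rightarrow> 'a set" where
  "component V E v = {w \<in> V. (adj_in V E)\<^sup>*\<^sup>* v w}"

definition connected_graph :: "'a set \<Rightarrow> ('a \<Rightarrow> 'a \<Rightarrow> bool) \<Rightarrow> bool" where
  "connected_graph V E \<longleftrightarrow> V \<noteq> {} \<and> (\<forall>u \<in> V. \<forall>w \<in> V. (adj_in V E)\<^sup>*\<^sup>* u w)"

definition Dg :: "'a set \<Rightarrow> ('a \<Rightarrow> 'a \<Rightarrow> bool) \<Rightarrow> 'a \<Rightarrow> 'a set" where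
  "Dg V E v =
    (if card V = 1 then {v}
     else if \<not> connected_graph V E then component V E v
     else if \<not> connected_graph V (compl_adj V E) then component V (compl_adj V E) v
     else (THE M. max_proper_module V E M \<and> v \<in> M))"

primrec Dseq :: "'a set \<Rightarrow> ('a \<Rightarrow> 'a \<Rightarrow> bool) \<Rightarrow> 'a \<Rightarrow> nat \<Rightarrow> 'a set" where
  "Dseq V E v 0 = V"
| "Dseq V E v (Suc i) = Dg (Dseq V E v i) E v"

definition Mvw :: "'a set \<Rightarrow> ('a \<Rightarrow> 'a \<Rightarrow> bool) \<Rightarrow> 'a \<Rightarrow> 'a \<Rightarrow> 'a set" where
  "Mvw V E v w = \<Inter> {M. is_module V E M \<and> v \<in> M \<and> w \<in> M}"

definition prec_v :: "'a set \<Rightarrow> ('a \<Rightarrow> 'a \<Rightarrow> bool) \<Rightarrow> 'a \<Rightarrow> 'a \<Rightarrow> 'a \<Rightarrow> bool" where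
  "prec_v V E v w1 w2 \<longleftrightarrow> Mvw V E v w2 \<subset> Mvw V E v w1"

definition sim_v :: "'a set \<Rightarrow> ('a \<Rightarrow> 'a \<Rightarrow> bool) \<Rightarrow> 'a \<Rightarrow> 'a \<Rightarrow> 'a \<Rightarrow> bool" where
  "sim_v V E v w1 w2 \<longleftrightarrow> \<not> prec_v V E v w1 w2 \<and> \<not> prec_v V E v w2 w1"

definition cls_v :: "'a set \<Rightarrow> ('a \<Rightarrow> 'a \<Rightarrow> bool) \<Rightarrow> 'a \<Rightarrow> 'a \<Rightarrow> 'a set" where
  "cls_v V E v w = {u \<in> V. sim_v V E v w u}"

definition classes_v :: "'a set \<Rightarrow> ('a \<Rightarrow> 'a \<Rightarrow> bool) \<Rightarrow> 'a \<Rightarrow> 'a set set" where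
  "classes_v V E v = cls_v V E v ` V"

definition cls_less :: "'a set \<Rightarrow> ('a \<Rightarrow> 'a \<Rightarrow> bool) \<Rightarrow> 'a \<Rightarrow> 'a set \<Rightarrow> 'a set \<Rightarrow> bool" where
  "cls_less V E v C1 C2 \<longleftrightarrow> (\<exists>w1 \<in> C1. \<exists>w2 \<in> C2. prec_v V E v w1 w2)"

text \<open>p_v(C): position of C in the strict linear order on V/~_v (smallest class gets 0),
  i.e. the number of classes strictly below C.\<close>
definition pos_v :: "'a set \<Rightarrow> ('a \<Rightarrow> 'a \<Rightarrow> bool) \<Rightarrow> 'a \<Rightarrow> 'a set \<Rightarrow> nat" where
  "pos_v V E v C = card {C' \<in> classes_v V E v. cls_less V E v C' C}"

definition Sset :: "'a set \<Rightarrow> ('a \<Rightarrow> 'a \<Rightarrow> bool) \<Rightarrow> 'a \<Rightarrow> nat \<Rightarrow> 'a set" where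
  "Sset V E v i = {v} \<union> \<Union> {Mvw V E v w | w. w \<in> V \<and> pos_v V E v (cls_v V E v w) = i}"

end

theory Submission
  imports Defs
begin

lemma module_trans:
  assumes U: "is_module V E U" and M: "is_module U E M"
  shows "is_module V E M"
  unfolding is_module_def
proof (intro conjI ballI)
  have UV: "U \<subseteq> V" and MU: "M \<subseteq> U" and Mne: "M \<noteq> {}" using U M unfolding is_module_def by auto
  show "M \<noteq> {}" using Mne .
  show "M \<subseteq> V" using UV MU by auto
  fix u assume u: "u \<in> V - M"
  show "(\<forall>m\<in>M. E u m) \<or> (\<forall>m\<in>M. \<not> E u m)"
  proof (cases "u \<in> U")
    case True
    then have "u \<in> U - M" using u by auto
    then show ?thesis using M unfolding is_module_def by auto
  next
    case False
    then have "u \<in> V - U" using u by auto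
    then have "(\<forall>m\<in>U. E u m) \<or> (\<forall>m\<in>U. \<not> E u m)" using U unfolding is_module_def by auto
    then show ?thesis using MU by auto
  qed
qed

lemma module_restrict:
  assumes M: "is_module V E M" and UV: "U \<subseteq> V" and ne: "M \<inter> U \<noteq> {}"
  shows "is_module U E (M \<inter> U)"
  unfolding is_module_def
proof (intro conjI ballI)
  show "M \<inter> U \<noteq> {}" using ne .
  show "M \<inter> U \<subseteq> U" by auto
  fix u assume u: "u \<in> U - M \<inter> U"
  then have "u \<in> V - M" using UV by auto
  then have "(\<forall>m\<in>M. E u m) \<or> (\<forall>m\<in>M. \<not> E u m)" using M unfolding is_module_def by auto
  then show "(\<forall>m\<in>M \<inter> U. E u m) \<or> (\<forall>m\<in>M \<inter> U. \<not> E u m)" by auto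
qed

lemma module_union:
  assumes A: "is_module U E A" and B: "is_module U E B" and ne: "A \<inter> B \<noteq> {}"
  shows "is_module U E (A \<union> B)"
proof -
  obtain y where y: "y \<in> A" "y \<in> B" using ne by blast
  show ?thesis unfolding is_module_def
  proof (intro conjI ballI)
    show "A \<union> B \<noteq> {}" using y by blast
    show "A \<union> B \<subseteq> U" using A B unfolding is_module_def by blast
  next
    fix u assume u: "u \<in> U - (A \<union> B)"
    have hA: "(\<forall>m\<in>A. E u m) \<or> (\<forall>m\<in>A. \<not> E u m)" using A u unfolding is_module_def by blast
    have hB: "(\<forall>m\<in>B. E u m) \<or> (\<forall>m\<in>B. \<not> E u m)" using B u unfolding is_module_def by blast
    show "(\<forall>m\<in>A \<union> B. E u m) \<or> (\<forall>m\<in>A \<union> B. \<not> E u m)"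
    proof (cases "E u y")
      case True
      then have "\<forall>m\<in>A. E u m" "\<forall>m\<in>B. E u m" using hA hB y by auto
      then show ?thesis by auto
    next
      case False
      then have "\<forall>m\<in>A. \<not> E u m" "\<forall>m\<in>B. \<not> E u m" using hA hB y by auto
      then show ?thesis by auto
    qed
  qed
qed

lemma module_self: "U \<noteq> {} \<Longrightarrow> is_module U E U"
  unfolding is_module_def by blast

lemma module_single: "v \<in> U \<Longrightarrow> is_module U E {v}"
  unfolding is_module_def by blast

lemma Mvw_lower: "is_module U E M \<Longrightarrow> v \<in> M \<Longrightarrow> w \<in> M \<Longrightarrow> Mvw U E v w \<subseteq> M"
  unfolding Mvw_def by (rule Inter_lower) simp

lemma Mvw_mem: "v \<in> Mvw U E v w" "w \<in> Mvw U E v w"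
  unfolding Mvw_def by (rule InterI; simp)+

lemma Mvw_sub: "v \<in> U \<Longrightarrow> w \<in> U \<Longrightarrow> Mvw U E v w \<subseteq> U"
  by (rule Mvw_lower[OF module_self]) auto

lemma Mvw_eqI:
  assumes "is_module U E S" "v \<in> S" "w \<in> S"
    "\<And>M. is_module U E M \<Longrightarrow> v \<in> M \<Longrightarrow> w \<in> M \<Longrightarrow> S \<subseteq> M"
  shows "Mvw U E v w = S"
proof (rule equalityI)
  show "Mvw U E v w \<subseteq> S" using assms(1-3) by (rule Mvw_lower)
  show "S \<subseteq> Mvw U E v w" unfolding Mvw_def
    by (rule Inter_greatest) (use assms(4) in simp)
qed

lemma Mvw_vv: "v \<in> U \<Longrightarrow> Mvw U E v v = {v}"
  by (rule Mvw_eqI[OF module_single]) simp_all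

lemma Mvw_transfer:
  assumes U: "is_module V E U" and v: "v \<in> U" and w: "w \<in> U"
  shows "Mvw V E v w = Mvw U E v w"
proof (rule equalityI)
  show "Mvw V E v w \<subseteq> Mvw U E v w"
  proof
    fix x assume x: "x \<in> Mvw V E v w"
    show "x \<in> Mvw U E v w" unfolding Mvw_def
    proof (rule InterI)
      fix M assume "M \<in> {M. is_module U E M \<and> v \<in> M \<and> w \<in> M}"
      then have M: "is_module U E M" "v \<in> M" "w \<in> M" by auto
      have "is_module V E M" using module_trans[OF U M(1)] .
      then have "Mvw V E v w \<subseteq> M" using M(2,3) by (rule Mvw_lower)
      then show "x \<in> M" using x by (rule subsetD)
    qed
  qed
next
  have UV: "U \<subseteq> V" using U unfolding is_module_def by (elim conjE)
  show "Mvw U E v w \<subseteq> Mvw V E v w"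
  proof
    fix x assume x: "x \<in> Mvw U E v w"
    show "x \<in> Mvw V E v w" unfolding Mvw_def
    proof (rule InterI)
      fix M assume "M \<in> {M. is_module V E M \<and> v \<in> M \<and> w \<in> M}"
      then have M: "is_module V E M" "v \<in> M" "w \<in> M" by auto
      have ne: "M \<inter> U \<noteq> {}" using M(2) v by auto
      have "is_module U E (M \<inter> U)" using module_restrict[OF M(1) UV ne] .
      then have "Mvw U E v w \<subseteq> M \<inter> U" by (rule Mvw_lower) (use M v w in auto)
      then show "x \<in> M" using x by auto
    qed
  qed
qed

lemma compl_adj_out: "M \<subseteq> U \<Longrightarrow> u \<in> U - M \<Longrightarrow> m \<in> M \<Longrightarrow> compl_adj U E u m = (\<not> E u m)"
  unfolding compl_adj_def by auto

lemma is_module_compl: "is_module U (compl_adj U E) M = is_module U E M"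
proof -
  have "(\<forall>u\<in>U - M. (\<forall>m\<in>M. compl_adj U E u m) \<or> (\<forall>m\<in>M. \<not> compl_adj U E u m)) =
        (\<forall>u\<in>U - M. (\<forall>m\<in>M. E u m) \<or> (\<forall>m\<in>M. \<not> E u m))" if "M \<subseteq> U"
  proof -
    have "\<And>u. u \<in> U - M \<Longrightarrow> ((\<forall>m\<in>M. compl_adj U E u m) \<or> (\<forall>m\<in>M. \<not> compl_adj U E u m)) =
        ((\<forall>m\<in>M. E u m) \<or> (\<forall>m\<in>M. \<not> E u m))"
      using compl_adj_out[OF that] by auto
    then show ?thesis by auto
  qed
  then show ?thesis unfolding is_module_def by auto
qed

lemma Mvw_compl: "Mvw U (compl_adj U E) v w = Mvw U E v w"
  unfolding Mvw_def is_module_compl ..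

definition good where "good U E v D1 \<longleftrightarrow> is_module U E D1 \<and> v \<in> D1 \<and> D1 \<subset> U \<and>
  (\<forall>M. is_module U E M \<and> v \<in> M \<and> \<not> M \<subseteq> D1 \<longrightarrow> D1 \<subseteq> M) \<and>
  (\<forall>w1 \<in> U - D1. \<forall>w2 \<in> U - D1. \<not> Mvw U E v w1 \<subset> Mvw U E v w2) \<and>
  (\<forall>x \<in> U. \<exists>w \<in> U - D1. x \<in> Mvw U E v w)"

lemma good_compl: "good U (compl_adj U E) v D = good U E v D"
  unfolding good_def is_module_compl Mvw_compl ..


lemma rtr_sym:
  assumes sym: "\<forall>x y. E x y \<longrightarrow> E y x" and r: "(adj_in U E)\<^sup>*\<^sup>* a b"
  shows "(adj_in U E)\<^sup>*\<^sup>* b a"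
  using r
proof (induction rule: rtranclp_induct)
  case base then show ?case by (rule rtranclp.rtrancl_refl)
next
  case (step y z)
  have "adj_in U E z y" using step(2) sym unfolding adj_in_def by simp
  then show ?case using step(3) by (rule converse_rtranclp_into_rtranclp)
qed

lemma comp_closed:
  assumes x: "x \<in> component U E a" and y: "y \<in> U" and e: "E x y"
  shows "y \<in> component U E a"
proof -
  have r: "(adj_in U E)\<^sup>*\<^sup>* a x" and xU: "x \<in> U" using x unfolding component_def by auto
  have "adj_in U E x y" unfolding adj_in_def using xU y e by simp
  then have "(adj_in U E)\<^sup>*\<^sup>* a y" using r by (rule rtranclp.rtrancl_into_rtrancl[rotated])
  then show ?thesis unfolding component_def using y by simp
qed

lemma comp_self: "a \<in> U \<Longrightarrow> a \<in> component U E a"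
  unfolding component_def by simp

lemma comp_sub: "component U E a \<subseteq> U"
  unfolding component_def by (rule subsetI) simp

lemma comp_none:
  assumes sym: "\<forall>x y. E x y \<longrightarrow> E y x"
    and u: "u \<in> U" and nu: "u \<notin> component U E a" and m: "m \<in> component U E a"
  shows "\<not> E u m"
proof
  assume "E u m"
  then have "E m u" using sym by simp
  then have "u \<in> component U E a" using comp_closed[OF m u] by simp
  then show False using nu by simp
qed

lemma comp_module:
  assumes sym: "\<forall>x y. E x y \<longrightarrow> E y x" and a: "a \<in> U"
  shows "is_module U E (component U E a)"
  unfolding is_module_def
proof (intro conjI ballI)
  show "component U E a \<noteq> {}" using comp_self[OF a] by auto
  show "component U E a \<subseteq> U" by (rule comp_sub)
  fix u assume u: "u \<in> U - component U E a"
  have "\<forall>m\<in>component U E a. \<not> E u m"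
  proof
    fix m assume "m \<in> component U E a"
    then show "\<not> E u m" using comp_none[OF sym, of u U a m] u by simp
  qed
  then show "(\<forall>m\<in>component U E a. E u m) \<or> (\<forall>m\<in>component U E a. \<not> E u m)" by (rule disjI2)
qed

lemma comp_eq:
  assumes sym: "\<forall>x y. E x y \<longrightarrow> E y x" and b: "b \<in> component U E a"
  shows "component U E b = component U E a"
proof -
  have ab: "(adj_in U E)\<^sup>*\<^sup>* a b" using b unfolding component_def by simp
  have ba: "(adj_in U E)\<^sup>*\<^sup>* b a" using rtr_sym[OF sym ab] .
  have "(adj_in U E)\<^sup>*\<^sup>* b x = (adj_in U E)\<^sup>*\<^sup>* a x" for x
  proof
    assume "(adj_in U E)\<^sup>*\<^sup>* b x" then show "(adj_in U E)\<^sup>*\<^sup>* a x" using ab by (rule rtranclp_trans[rotated])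
  next
    assume "(adj_in U E)\<^sup>*\<^sup>* a x" then show "(adj_in U E)\<^sup>*\<^sup>* b x" using ba by (rule rtranclp_trans[rotated])
  qed
  then show ?thesis unfolding component_def by simp
qed

lemma comp_strong:
  assumes sym: "\<forall>x y. E x y \<longrightarrow> E y x" and M: "is_module U E M" and a: "a \<in> M"
    and nsub: "\<not> M \<subseteq> component U E a"
  shows "component U E a \<subseteq> M"
proof -
  obtain w where w: "w \<in> M" "w \<notin> component U E a" using nsub by auto
  have MU: "M \<subseteq> U" using M unfolding is_module_def by simp
  have key: "x \<in> M" if "(adj_in U E)\<^sup>*\<^sup>* a x" for x
    using that
  proof (induction rule: rtranclp_induct)
    case base then show ?case using a by simp
  next
    case (step y z)
    show ?case
    proof (rule ccontr)
      assume z: "z \<notin> M"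
      have zU: "z \<in> U" and Eyz: "E y z" using step(2) unfolding adj_in_def by auto
      have zz: "z \<in> U - M" using z zU by simp
      have dis: "(\<forall>m\<in>M. E z m) \<or> (\<forall>m\<in>M. \<not> E z m)" using M zz unfolding is_module_def by simp
      have "E z y" using sym Eyz by simp
      then have all: "\<forall>m\<in>M. E z m" using dis step(3) by auto
      then have Ezw: "E z w" using w(1) by simp
      have "(adj_in U E)\<^sup>*\<^sup>* a z" using step(1) step(2) by (rule rtranclp.rtrancl_into_rtrancl)
      then have zc: "z \<in> component U E a" unfolding component_def using zU by simp
      have "w \<in> U" using w(1) MU by auto
      then have "w \<in> component U E a" using comp_closed[OF zc _ Ezw] by simp
      then show False using w(2) by simp
    qed
  qed
  show ?thesis
  proof
    fix x assume "x \<in> component U E a"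
    then have "(adj_in U E)\<^sup>*\<^sup>* a x" unfolding component_def by simp
    then show "x \<in> M" by (rule key)
  qed
qed

lemma comp_proper:
  assumes sym: "\<forall>x y. E x y \<longrightarrow> E y x" and a: "a \<in> U" and nc: "\<not> connected_graph U E"
  shows "component U E a \<subset> U"
proof -
  have "U \<noteq> {}" using a by auto
  then obtain x y where xy: "x \<in> U" "y \<in> U" "\<not> (adj_in U E)\<^sup>*\<^sup>* x y"
    using nc unfolding connected_graph_def by auto
  show ?thesis
  proof (rule ccontr)
    assume "\<not> component U E a \<subset> U"
    then have "component U E a = U" using comp_sub[of U E a] unfolding psubset_eq by simp
    then have ax: "(adj_in U E)\<^sup>*\<^sup>* a x" and ay: "(adj_in U E)\<^sup>*\<^sup>* a y"
      using xy unfolding component_def by auto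
    have "(adj_in U E)\<^sup>*\<^sup>* x a" using rtr_sym[OF sym ax] .
    then have "(adj_in U E)\<^sup>*\<^sup>* x y" using ay by (rule rtranclp_trans)
    then show False using xy by simp
  qed
qed

lemma disc_good:
  assumes sym: "\<forall>x y. E x y \<longrightarrow> E y x" and v: "v \<in> U" and nc: "\<not> connected_graph U E"
  shows "good U E v (component U E v)"
proof -
  let ?C = "component U E v"
  have Mw: "Mvw U E v w = ?C \<union> component U E w" if w: "w \<in> U - ?C" for w
  proof (rule Mvw_eqI)
    show "is_module U E (?C \<union> component U E w)"
      unfolding is_module_def
    proof (intro conjI ballI)
      show "?C \<union> component U E w \<noteq> {}" using comp_self[OF v] by auto
      show "?C \<union> component U E w \<subseteq> U" using comp_sub[of U E v] comp_sub[of U E w] by simp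
      fix u assume u: "u \<in> U - (?C \<union> component U E w)"
      have "\<forall>m\<in>?C \<union> component U E w. \<not> E u m"
      proof
        fix m assume "m \<in> ?C \<union> component U E w"
        then show "\<not> E u m" using comp_none[OF sym, of u U] u by auto
      qed
      then show "(\<forall>m\<in>?C \<union> component U E w. E u m) \<or> (\<forall>m\<in>?C \<union> component U E w. \<not> E u m)"
        by (rule disjI2)
    qed
    show "v \<in> ?C \<union> component U E w" using comp_self[OF v] by simp
    show "w \<in> ?C \<union> component U E w" using comp_self[of w U E] w by simp
  next
    fix M assume M: "is_module U E M" "v \<in> M" "w \<in> M"
    have "\<not> M \<subseteq> ?C" using M(3) w by auto
    then have c1: "?C \<subseteq> M" using comp_strong[OF sym M(1) M(2)] by simp
    have "v \<notin> component U E w"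
    proof
      assume "v \<in> component U E w"
      then have "component U E v = component U E w" using comp_eq[OF sym] by simp
      then show False using w comp_self[of w U E] by auto
    qed
    then have "\<not> M \<subseteq> component U E w" using M(2) by auto
    then have "component U E w \<subseteq> M" using comp_strong[OF sym M(1) M(3)] by simp
    then show "?C \<union> component U E w \<subseteq> M" using c1 by simp
  qed
  have prp: "?C \<subset> U" using comp_proper[OF sym v nc] .
  show ?thesis unfolding good_def
  proof (intro conjI allI impI ballI)
    show "is_module U E ?C" using comp_module[OF sym v] .
    show "v \<in> ?C" using comp_self[OF v] .
    show "?C \<subset> U" using prp .
  next
    fix M assume "is_module U E M \<and> v \<in> M \<and> \<not> M \<subseteq> ?C"
    then show "?C \<subseteq> M" using comp_strong[OF sym] by simp
  next
    fix w1 w2 assume w1: "w1 \<in> U - ?C" and w2: "w2 \<in> U - ?C"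
    show "\<not> Mvw U E v w1 \<subset> Mvw U E v w2"
    proof
      assume lt: "Mvw U E v w1 \<subset> Mvw U E v w2"
      have "w1 \<in> Mvw U E v w2" using lt Mvw_mem(2)[of w1 U E v] by auto
      then have "w1 \<in> ?C \<union> component U E w2" using Mw[OF w2] by simp
      then have "w1 \<in> component U E w2" using w1 by simp
      then have "component U E w1 = component U E w2" using comp_eq[OF sym] by simp
      then have "Mvw U E v w1 = Mvw U E v w2" using Mw[OF w1] Mw[OF w2] by simp
      then show False using lt by simp
    qed
  next
    fix x assume x: "x \<in> U"
    obtain w0 where w0: "w0 \<in> U - ?C" using prp by auto
    show "\<exists>w\<in>U - ?C. x \<in> Mvw U E v w"
    proof (cases "x \<in> ?C")
      case True
      then have "x \<in> Mvw U E v w0" using Mw[OF w0] by simp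
      then show ?thesis using w0 by blast
    next
      case False
      then have "x \<in> U - ?C" using x by simp
      moreover have "x \<in> Mvw U E v x" by (rule Mvw_mem(2))
      ultimately show ?thesis by (rule bexI[rotated])
    qed
  qed
qed


lemma cut_reach:
  assumes cl: "\<forall>s\<in>S. \<forall>t. R s t \<longrightarrow> t \<in> S" and r: "R\<^sup>*\<^sup>* a b" and a: "a \<in> S"
  shows "b \<in> S"
  using r
proof (induction rule: rtranclp_induct)
  case base then show ?case using a .
next
  case (step y z) then show ?case using cl by blast
qed

lemma overlap_disc:
  assumes sym: "\<forall>x y. E x y \<longrightarrow> E y x"
    and A: "is_module U E A" and B: "is_module U E B"
    and un: "A \<union> B = U" and int: "A \<inter> B \<noteq> {}" and nA: "A \<noteq> U" and nB: "B \<noteq> U"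
  shows "\<not> connected_graph U E \<or> \<not> connected_graph U (compl_adj U E)"
proof -
  obtain y where y: "y \<in> A" "y \<in> B" using int by auto
  obtain x0 where x0: "x0 \<in> U" "x0 \<notin> A" using nA un by auto
  obtain z0 where z0: "z0 \<in> U" "z0 \<notin> B" using nB un by auto
  have yU: "y \<in> U" using y un by auto
  have z0A: "z0 \<in> A" using z0 un by auto
  have hA: "E x a = E x y" if xa: "x \<in> U - A" "a \<in> A" for x a
  proof -
    have "(\<forall>m\<in>A. E x m) \<or> (\<forall>m\<in>A. \<not> E x m)" using A xa(1) unfolding is_module_def by simp
    then show "E x a = E x y" using xa(2) y(1) by auto
  qed
  have hB: "E x a = E x y" if xa: "x \<in> U - B" "a \<in> B" for x a
  proof -
    have "(\<forall>m\<in>B. E x m) \<or> (\<forall>m\<in>B. \<not> E x m)" using B xa(1) unfolding is_module_def by simp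
    then show "E x a = E x y" using xa(2) y(2) by auto
  qed
  have c: "E x a = E z0 y" if xa: "x \<in> U - A" "a \<in> A" for x a
  proof -
    have xB: "x \<in> B" using xa un by auto
    have "E x a = E x y" using hA xa .
    also have "\<dots> = E x z0" using hA[OF xa(1) z0A] by simp
    also have "\<dots> = E z0 x" using sym by auto
    also have "\<dots> = E z0 y" using hB[of z0 x] z0 xB by simp
    finally show ?thesis .
  qed
  show ?thesis
  proof (cases "E z0 y")
    case False
    have cl: "\<forall>s\<in>U - A. \<forall>t. adj_in U E s t \<longrightarrow> t \<in> U - A"
    proof (intro ballI allI impI)
      fix s t assume s: "s \<in> U - A" and st: "adj_in U E s t"
      have tU: "t \<in> U" and Est: "E s t" using st unfolding adj_in_def by auto
      show "t \<in> U - A"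
      proof (rule ccontr)
        assume "t \<notin> U - A"
        then have "t \<in> A" using tU by simp
        then have "E s t = E z0 y" using c s by simp
        then show False using Est False by simp
      qed
    qed
    have "\<not> (adj_in U E)\<^sup>*\<^sup>* x0 y"
    proof
      assume "(adj_in U E)\<^sup>*\<^sup>* x0 y"
      then have "y \<in> U - A" using cut_reach[OF cl] x0 by simp
      then show False using y by simp
    qed
    then have "\<not> connected_graph U E" unfolding connected_graph_def using x0 yU by auto
    then show ?thesis by simp
  next
    case True
    have cl: "\<forall>s\<in>U - A. \<forall>t. adj_in U (compl_adj U E) s t \<longrightarrow> t \<in> U - A"
    proof (intro ballI allI impI)
      fix s t assume s: "s \<in> U - A" and st: "adj_in U (compl_adj U E) s t"
      have tU: "t \<in> U" and Est: "\<not> E s t" using st unfolding adj_in_def compl_adj_def by auto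
      show "t \<in> U - A"
      proof (rule ccontr)
        assume "t \<notin> U - A"
        then have "t \<in> A" using tU by simp
        then have "E s t = E z0 y" using c s by simp
        then show False using Est True by simp
      qed
    qed
    have "\<not> (adj_in U (compl_adj U E))\<^sup>*\<^sup>* x0 y"
    proof
      assume "(adj_in U (compl_adj U E))\<^sup>*\<^sup>* x0 y"
      then have "y \<in> U - A" using cut_reach[OF cl] x0 by simp
      then show False using y by simp
    qed
    then have "\<not> connected_graph U (compl_adj U E)" unfolding connected_graph_def using x0 yU by auto
    then show ?thesis by simp
  qed
qed

lemma prime_good:
  assumes sym: "\<forall>x y. E x y \<longrightarrow> E y x" and fin: "finite U" and v: "v \<in> U" and c1: "card U \<noteq> 1"
    and cn: "connected_graph U E" and cn2: "connected_graph U (compl_adj U E)"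
  shows "good U E v (THE M. max_proper_module U E M \<and> v \<in> M)"
proof -
  have K: False if "is_module U E A" "is_module U E B" "A \<union> B = U" "A \<inter> B \<noteq> {}" "A \<noteq> U" "B \<noteq> U" for A B
    using overlap_disc[OF sym that] cn cn2 by simp
  define P where "P = {M. is_module U E M \<and> M \<subset> U \<and> v \<in> M}"
  have "U \<noteq> {v}" using c1 by auto
  then have vP: "{v} \<in> P" unfolding P_def using module_single[OF v] v by auto
  have finP: "finite P"
  proof (rule finite_subset)
    show "P \<subseteq> Pow U" unfolding P_def by auto
    show "finite (Pow U)" using fin by simp
  qed
  have finc: "finite (card ` P)" using finP by simp
  have nec: "card ` P \<noteq> {}" using vP by auto
  have "Max (card ` P) \<in> card ` P" using Max_in[OF finc nec] .
  then obtain M0 where M0P: "M0 \<in> P" and cM0: "card M0 = Max (card ` P)" by auto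
  have cle: "card M \<le> card M0" if "M \<in> P" for M
    using Max_ge[OF finc] that cM0 by simp
  have M0mod: "is_module U E M0" and M0prop: "M0 \<subset> U" and vM0: "v \<in> M0" using M0P unfolding P_def by auto
  have maxM0: "M' = M0" if "is_module U E M'" "M' \<subset> U" "M0 \<subseteq> M'" for M'
  proof -
    have "M' \<in> P" unfolding P_def using that vM0 by auto
    then have "card M' \<le> card M0" by (rule cle)
    moreover have finM': "finite M'" using that(2) fin by (auto intro: finite_subset)
    moreover have "card M0 \<le> card M'" using card_mono[OF finM' that(3)] .
    ultimately have "card M0 = card M'" by simp
    then show "M' = M0" using card_subset_eq[OF finM' that(3)] by simp
  qed
  have mpm: "max_proper_module U E M0" unfolding max_proper_module_def
    using M0mod M0prop maxM0 by blast
  have strong: "M = U" if M: "is_module U E M" "v \<in> M" "w \<in> M" "w \<notin> M0" for M w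
  proof -
    have um: "is_module U E (M \<union> M0)" using module_union[OF M(1) M0mod] M(2) vM0 by auto
    have MU: "M \<subseteq> U" using M(1) unfolding is_module_def by simp
    have un: "M \<union> M0 = U"
    proof (rule ccontr)
      assume "M \<union> M0 \<noteq> U"
      then have "M \<union> M0 \<subset> U" using MU M0prop by auto
      then have "M \<union> M0 = M0" using maxM0[OF um] by auto
      then show False using M(3,4) by auto
    qed
    show "M = U"
    proof (rule ccontr)
      assume "M \<noteq> U"
      moreover have "M \<inter> M0 \<noteq> {}" using M(2) vM0 by auto
      moreover have "M0 \<noteq> U" using M0prop by auto
      ultimately show False using K[OF M(1) M0mod un] by simp
    qed
  qed
  have uniq: "M1 = M0" if "max_proper_module U E M1 \<and> v \<in> M1" for M1
  proof -
    have M1: "is_module U E M1" "M1 \<subset> U" "v \<in> M1"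
      and mx: "\<forall>M'. is_module U E M' \<and> M' \<subset> U \<and> M1 \<subseteq> M' \<longrightarrow> M' = M1"
      using that unfolding max_proper_module_def by auto
    have sub: "M1 \<subseteq> M0"
    proof
      fix w assume w: "w \<in> M1"
      show "w \<in> M0"
      proof (rule ccontr)
        assume "w \<notin> M0"
        then have "M1 = U" using strong[OF M1(1) M1(3) w] by simp
        then show False using M1(2) by simp
      qed
    qed
    then have "M0 = M1" using mx M0mod M0prop by blast
    then show ?thesis by simp
  qed
  have the: "(THE M. max_proper_module U E M \<and> v \<in> M) = M0"
  proof (rule the_equality)
    show "max_proper_module U E M0 \<and> v \<in> M0" using mpm vM0 by simp
    show "\<And>M. max_proper_module U E M \<and> v \<in> M \<Longrightarrow> M = M0" by (rule uniq)
  qed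
  have MwU: "Mvw U E v w = U" if w: "w \<in> U - M0" for w
  proof (rule Mvw_eqI)
    show "is_module U E U" using v by (intro module_self) auto
    show "v \<in> U" using v .
    show "w \<in> U" using w by simp
    show "U \<subseteq> M" if "is_module U E M" "v \<in> M" "w \<in> M" for M
      using strong[OF that] w by simp
  qed
  obtain w0 where w0: "w0 \<in> U - M0" using M0prop by auto
  show ?thesis unfolding the good_def
  proof (intro conjI allI impI ballI)
    show "is_module U E M0" using M0mod .
    show "v \<in> M0" using vM0 .
    show "M0 \<subset> U" using M0prop .
  next
    fix M assume h: "is_module U E M \<and> v \<in> M \<and> \<not> M \<subseteq> M0"
    then obtain w where "w \<in> M" "w \<notin> M0" by auto
    then have "M = U" using strong h by auto
    then show "M0 \<subseteq> M" using M0prop by auto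
  next
    fix w1 w2 assume "w1 \<in> U - M0" "w2 \<in> U - M0"
    then show "\<not> Mvw U E v w1 \<subset> Mvw U E v w2" using MwU by simp
  next
    fix x assume "x \<in> U"
    then have "x \<in> Mvw U E v w0" using MwU[OF w0] by simp
    then show "\<exists>w\<in>U - M0. x \<in> Mvw U E v w" using w0 by blast
  qed
qed

lemma Dg_good:
  assumes sym: "\<forall>x y. E x y \<longrightarrow> E y x" and fin: "finite U" and v: "v \<in> U" and c1: "card U \<noteq> 1"
  shows "good U E v (Dg U E v)"
proof (cases "connected_graph U E")
  case False
  then have "Dg U E v = component U E v" using c1 unfolding Dg_def by simp
  then show ?thesis using disc_good[OF sym v False] by simp
next
  case True
  show ?thesis
  proof (cases "connected_graph U (compl_adj U E)")
    case False
    then have eq: "Dg U E v = component U (compl_adj U E) v" using c1 True unfolding Dg_def by simp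
    have sym2: "\<forall>x y. compl_adj U E x y \<longrightarrow> compl_adj U E y x" unfolding compl_adj_def using sym by auto
    have "good U (compl_adj U E) v (component U (compl_adj U E) v)" using disc_good[OF sym2 v False] .
    then show ?thesis unfolding eq good_compl .
  next
    case True2: True
    then have eq: "Dg U E v = (THE M. max_proper_module U E M \<and> v \<in> M)" using c1 True unfolding Dg_def by simp
    show ?thesis unfolding eq using prime_good[OF sym fin v c1 True True2] .
  qed
qed


lemma graph_sym: "graph V E \<Longrightarrow> \<forall>x y. E x y \<longrightarrow> E y x"
  unfolding graph_def by simp

lemma step_exists: "P (0::nat) \<Longrightarrow> \<not> P n \<Longrightarrow> \<exists>k. P k \<and> \<not> P (Suc k)"
proof (induction n)
  case 0 then show ?case by simp
next
  case (Suc n)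
  show ?case
  proof (cases "P n")
    case True then show ?thesis using Suc.prems(2) by blast
  next
    case False then show ?thesis using Suc.IH Suc.prems(1) by blast
  qed
qed

lemma Dseq_inv:
  assumes g: "graph V E" and v: "v \<in> V"
  shows "v \<in> Dseq V E v i \<and> is_module V E (Dseq V E v i)"
proof (induction i)
  case 0
  have "V \<noteq> {}" using v by auto
  then show ?case using v module_self by simp
next
  case (Suc i)
  let ?U = "Dseq V E v i"
  have vU: "v \<in> ?U" and mU: "is_module V E ?U" using Suc by auto
  have UV: "?U \<subseteq> V" using mU unfolding is_module_def by simp
  have fin: "finite ?U" using g UV finite_subset unfolding graph_def by auto
  show ?case
  proof (cases "card ?U = 1")
    case True
    then have "Dseq V E v (Suc i) = {v}" by (simp add: Dg_def)
    then show ?thesis using v module_single by simp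
  next
    case False
    have gd: "good ?U E v (Dseq V E v (Suc i))" using Dg_good[OF graph_sym[OF g] fin vU False] by simp
    then have "is_module ?U E (Dseq V E v (Suc i))" "v \<in> Dseq V E v (Suc i)" unfolding good_def by auto
    then show ?thesis using module_trans[OF mU] by auto
  qed
qed

theorem lemma3p15:
  fixes V :: "'a set" and E :: "'a \<Rightarrow> 'a \<Rightarrow> bool" and v :: 'a and i :: nat
  assumes "graph V E" and "v \<in> V" and "i \<le> card V"
  shows "Dseq V E v i = Sset V E v i"
proof -
  note g = assms(1) and v = assms(2)
  define D where "D = Dseq V E v"
  have sym: "\<forall>x y. E x y \<longrightarrow> E y x" using graph_sym[OF g] .
  have finV: "finite V" using g unfolding graph_def by simp
  have Dv: "v \<in> D j" for j using Dseq_inv[OF g v] unfolding D_def by simp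
  have Dm: "is_module V E (D j)" for j using Dseq_inv[OF g v] unfolding D_def by simp
  have DV: "D j \<subseteq> V" for j using Dm[of j] unfolding is_module_def by simp
  have finD: "finite (D j)" for j using DV[of j] finV by (rule finite_subset)
  have D0: "D 0 = V" unfolding D_def by simp
  have DS: "D (Suc j) = Dg (D j) E v" for j unfolding D_def by simp
  have one: "D j = {v} \<and> D (Suc j) = {v}" if c: "card (D j) = 1" for j
  proof -
    obtain x where "D j = {x}" using c by (rule card_1_singletonE)
    then have Dj: "D j = {v}" using Dv[of j] by simp
    have "D (Suc j) = {v}" unfolding DS using c by (simp add: Dg_def)
    then show ?thesis using Dj by simp
  qed
  have gd: "good (D j) E v (D (Suc j))" if c: "card (D j) \<noteq> 1" for j
    unfolding DS using Dg_good[OF sym finD Dv c] .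
  have step_sub: "D (Suc j) \<subseteq> D j" for j
  proof (cases "card (D j) = 1")
    case True then show ?thesis using one by simp
  next
    case False then show ?thesis using gd[OF False] unfolding good_def by auto
  qed
  have dec: "D j \<subseteq> D k" if "k \<le> j" for j k
    using lift_Suc_antimono_le[of D, OF step_sub that] .
  have bound: "card (D j) = 1 \<or> card (D j) + j \<le> card V" for j
  proof (induction j)
    case 0 then show ?case using D0 by simp
  next
    case (Suc j)
    show ?case
    proof (cases "card (D j) = 1")
      case True then show ?thesis using one[OF True] by simp
    next
      case False
      then have le: "card (D j) + j \<le> card V" using Suc.IH by simp
      have "D (Suc j) \<subset> D j" using gd[OF False] unfolding good_def by simp
      then have "card (D (Suc j)) < card (D j)" using finD by (rule psubset_card_mono[rotated])
      then show ?thesis using le by simp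
    qed
  qed
  have ex: "card (D (card V)) = 1"
  proof (rule ccontr)
    assume n1: "card (D (card V)) \<noteq> 1"
    then have "card (D (card V)) = 0" using bound[of "card V"] by simp
    then have "D (card V) = {}" using finD by simp
    then show False using Dv[of "card V"] by simp
  qed
  define d where "d = (LEAST j. card (D j) = 1)"
  have cd: "card (D d) = 1" unfolding d_def using ex by (rule LeastI)
  have ltd: "card (D j) \<noteq> 1" if "j < d" for j using that unfolding d_def by (rule not_less_Least)
  have ged: "D j = {v}" if "d \<le> j" for j
    using that
  proof (induction rule: dec_induct)
    case base then show ?case using one[OF cd] by simp
  next
    case (step n)
    then have "card (D n) = 1" by simp
    then show ?case using one by simp
  qed
  have gdi: "good (D j) E v (D (Suc j))" if "j < d" for j using gd ltd that by simp
  have exlev: "\<exists>k. w \<in> D k \<and> w \<notin> D (Suc k)" if w: "w \<in> V" "w \<noteq> v" for w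
  proof (rule step_exists[of "\<lambda>k. w \<in> D k"])
    show "w \<in> D 0" using D0 w by simp
    show "w \<notin> D d" using ged[of d] w by simp
  qed
  have unilev: "k = k'" if "w \<in> D k" "w \<notin> D (Suc k)" "w \<in> D k'" "w \<notin> D (Suc k')" for w k k'
  proof (rule ccontr)
    assume "k \<noteq> k'"
    then consider "Suc k \<le> k'" | "Suc k' \<le> k" by linarith
    then show False
    proof cases
      case 1 then show False using dec[OF 1] that by auto
    next
      case 2 then show False using dec[OF 2] that by auto
    qed
  qed
  define lev where "lev w = (if w = v then d else (THE k. w \<in> D k \<and> w \<notin> D (Suc k)))" for w
  have levI: "lev w = k" if "w \<noteq> v" "w \<in> D k" "w \<notin> D (Suc k)" for w k
  proof -
    have "(THE k. w \<in> D k \<and> w \<notin> D (Suc k)) = k"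
      by (rule the_equality) (use that unilev in auto)
    then show ?thesis unfolding lev_def using that(1) by simp
  qed
  have levw: "w \<in> D (lev w) \<and> w \<notin> D (Suc (lev w))" if w: "w \<in> V" "w \<noteq> v" for w
  proof -
    obtain k where k: "w \<in> D k" "w \<notin> D (Suc k)" using exlev[OF w] by blast
    then show ?thesis using levI[OF w(2) k] by simp
  qed
  have levd: "lev w < d" if w: "w \<in> V" "w \<noteq> v" for w
  proof (rule ccontr)
    assume "\<not> lev w < d"
    then have "D (lev w) = {v}" using ged by simp
    then show False using levw[OF w] w(2) by simp
  qed
  have levv: "lev v = d" unfolding lev_def by simp
  have levle: "lev w \<le> d" if "w \<in> V" for w
    using levd[OF that] levv by (cases "w = v") auto
  have MMv: "Mvw V E v v = {v}" using Mvw_vv[OF v] .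
  have MMw: "Mvw V E v w = Mvw (D (lev w)) E v w \<and> D (Suc (lev w)) \<subset> Mvw V E v w \<and> Mvw V E v w \<subseteq> D (lev w)"
    if w: "w \<in> V" "w \<noteq> v" for w
  proof -
    define k where "k = lev w"
    have wk: "w \<in> D k" "w \<notin> D (Suc k)" using levw[OF w] unfolding k_def by auto
    have kd: "k < d" using levd[OF w] unfolding k_def .
    have strong: "\<forall>M. is_module (D k) E M \<and> v \<in> M \<and> \<not> M \<subseteq> D (Suc k) \<longrightarrow> D (Suc k) \<subseteq> M"
      using gdi[OF kd] unfolding good_def by simp
    have tr: "Mvw V E v w = Mvw (D k) E v w" using Mvw_transfer[OF Dm Dv wk(1)] .
    have sub1: "D (Suc k) \<subseteq> Mvw (D k) E v w" unfolding Mvw_def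
    proof (rule Inter_greatest)
      fix M assume "M \<in> {M. is_module (D k) E M \<and> v \<in> M \<and> w \<in> M}"
      then have M: "is_module (D k) E M" "v \<in> M" "w \<in> M" by auto
      have "\<not> M \<subseteq> D (Suc k)" using M(3) wk(2) by auto
      then show "D (Suc k) \<subseteq> M" using strong M by simp
    qed
    have wM: "w \<in> Mvw (D k) E v w" by (rule Mvw_mem(2))
    have sub2: "Mvw (D k) E v w \<subseteq> D k" using Mvw_sub[OF Dv wk(1)] .
    show ?thesis unfolding k_def[symmetric] tr using sub1 sub2 wM wk(2) by auto
  qed
  have MMsub: "Mvw V E v w \<subseteq> D (lev w)" if w: "w \<in> V" for w
  proof (cases "w = v")
    case True then show ?thesis using MMv Dv by simp
  next
    case False then show ?thesis using MMw[OF w False] by (elim conjE)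
  qed
  have fwd: "Mvw V E v w2 \<subset> Mvw V E v w1" if w: "w1 \<in> V" "w2 \<in> V" "lev w1 < lev w2" for w1 w2
  proof -
    have w1v: "w1 \<noteq> v" using w levle[OF w(2)] levv by auto
    have "Mvw V E v w2 \<subseteq> D (lev w2)" using MMsub[OF w(2)] .
    also have "\<dots> \<subseteq> D (Suc (lev w1))" using dec w(3) by simp
    finally show ?thesis using MMw[OF w(1) w1v] by auto
  qed
  have prec_iff: "prec_v V E v w1 w2 \<longleftrightarrow> lev w1 < lev w2" if w: "w1 \<in> V" "w2 \<in> V" for w1 w2
  proof
    assume "lev w1 < lev w2"
    then show "prec_v V E v w1 w2" unfolding prec_v_def using fwd w by simp
  next
    assume pr: "prec_v V E v w1 w2"
    then have lt: "Mvw V E v w2 \<subset> Mvw V E v w1" unfolding prec_v_def .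
    show "lev w1 < lev w2"
    proof (rule ccontr)
      assume "\<not> lev w1 < lev w2"
      then consider "lev w2 < lev w1" | "lev w1 = lev w2" by linarith
      then show False
      proof cases
        case 1 then show False using fwd[OF w(2) w(1)] lt by auto
      next
        case 2
        show False
        proof (cases "w1 = v")
          case True
          then have "lev w2 = d" using 2 levv by simp
          then have "w2 = v" using levd[OF w(2)] by auto
          then show False using lt True by simp
        next
          case False
          then have w2v: "w2 \<noteq> v" using 2 levv levd[OF w(1)] by auto
          define k where "k = lev w1"
          have kd: "k < d" using levd[OF w(1) False] unfolding k_def .
          have L3: "\<forall>a \<in> D k - D (Suc k). \<forall>b \<in> D k - D (Suc k). \<not> Mvw (D k) E v a \<subset> Mvw (D k) E v b"
            using gdi[OF kd] unfolding good_def by simp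
          have a: "w1 \<in> D k - D (Suc k)" using levw[OF w(1) False] unfolding k_def by simp
          have b: "w2 \<in> D k - D (Suc k)" using levw[OF w(2) w2v] 2 unfolding k_def by simp
          have e1: "Mvw V E v w1 = Mvw (D k) E v w1" using MMw[OF w(1) False] unfolding k_def by simp
          have e2: "Mvw V E v w2 = Mvw (D k) E v w2" using MMw[OF w(2) w2v] 2 unfolding k_def by simp
          show False using L3 a b lt unfolding e1 e2 by blast
        qed
      qed
    qed
  qed
  have cls_eq: "cls_v V E v w = {u \<in> V. lev u = lev w}" if w: "w \<in> V" for w
    unfolding cls_v_def sim_v_def using prec_iff w by auto
  define LS where "LS j = {u \<in> V. lev u = j}" for j
  have LSne: "LS j \<noteq> {}" if "j \<le> d" for j
  proof (cases "j = d")
    case True then show ?thesis unfolding LS_def using v levv by auto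
  next
    case False
    then have jd: "j < d" using that by simp
    then have "D (Suc j) \<subset> D j" using gdi unfolding good_def by simp
    then obtain u where u: "u \<in> D j" "u \<notin> D (Suc j)" by auto
    have uv: "u \<noteq> v" using u Dv by auto
    have "lev u = j" using levI[OF uv u] .
    moreover have "u \<in> V" using u DV by auto
    ultimately show ?thesis unfolding LS_def by auto
  qed
  have pos: "pos_v V E v (cls_v V E v w) = lev w" if w: "w \<in> V" for w
  proof -
    have set: "{C' \<in> classes_v V E v. cls_less V E v C' (cls_v V E v w)} = LS ` {..<lev w}"
    proof (rule set_eqI, rule iffI)
      fix C assume "C \<in> {C' \<in> classes_v V E v. cls_less V E v C' (cls_v V E v w)}"
      then obtain u where u: "u \<in> V" "C = cls_v V E v u" and less: "cls_less V E v C (cls_v V E v w)"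
        unfolding classes_v_def by auto
      from less obtain w1 w2 where w12: "w1 \<in> C" "w2 \<in> cls_v V E v w" "prec_v V E v w1 w2"
        unfolding cls_less_def by auto
      have w1: "w1 \<in> V" "lev w1 = lev u" using w12(1) cls_eq[OF u(1)] u(2) by auto
      have w2: "w2 \<in> V" "lev w2 = lev w" using w12(2) cls_eq[OF w] by auto
      have "lev u < lev w" using prec_iff[OF w1(1) w2(1)] w12(3) w1 w2 by simp
      moreover have "C = LS (lev u)" using u cls_eq unfolding LS_def by simp
      ultimately show "C \<in> LS ` {..<lev w}" by auto
    next
      fix C assume "C \<in> LS ` {..<lev w}"
      then obtain j where j: "j < lev w" "C = LS j" by auto
      have "j \<le> d" using levle[OF w] j by simp
      then obtain u where u: "u \<in> LS j" using LSne by blast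
      have uV: "u \<in> V" and lu: "lev u = j" using u unfolding LS_def by auto
      have Cu: "C = cls_v V E v u" using cls_eq[OF uV] j lu unfolding LS_def by simp
      have "C \<in> classes_v V E v" unfolding classes_v_def using Cu uV by simp
      moreover have "cls_less V E v C (cls_v V E v w)"
        unfolding cls_less_def
      proof (intro bexI)
        show "prec_v V E v u w" using prec_iff[OF uV w] lu j by simp
        show "u \<in> C" using Cu cls_eq[OF uV] uV by simp
        show "w \<in> cls_v V E v w" using cls_eq[OF w] w by simp
      qed
      ultimately show "C \<in> {C' \<in> classes_v V E v. cls_less V E v C' (cls_v V E v w)}" by simp
    qed
    have inj: "inj_on LS {..<lev w}"
    proof (rule inj_onI)
      fix a b assume a: "a \<in> {..<lev w}" and b: "b \<in> {..<lev w}" and eq: "LS a = LS b"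
      have "a \<le> d" using a levle[OF w] by simp
      then obtain u where "u \<in> LS a" using LSne by blast
      then have "u \<in> LS b" using eq by simp
      then show "a = b" using \<open>u \<in> LS a\<close> unfolding LS_def by simp
    qed
    show ?thesis unfolding pos_v_def set card_image[OF inj] by simp
  qed
  have cong: "(w \<in> V \<and> pos_v V E v (cls_v V E v w) = i) = (w \<in> V \<and> lev w = i)" for w
    using pos by auto
  have Sset_eq: "Sset V E v i = {v} \<union> \<Union> {Mvw V E v w | w. w \<in> V \<and> lev w = i}"
    unfolding Sset_def cong ..
  have main: "D i = {v} \<union> \<Union> {Mvw V E v w | w. w \<in> V \<and> lev w = i}"
  proof (cases "i < d")
    case True
    show ?thesis
    proof (rule equalityI)
      show "D i \<subseteq> {v} \<union> \<Union> {Mvw V E v w | w. w \<in> V \<and> lev w = i}"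
      proof
        fix x assume x: "x \<in> D i"
        have L4: "\<forall>x \<in> D i. \<exists>w \<in> D i - D (Suc i). x \<in> Mvw (D i) E v w"
          using gdi[OF True] unfolding good_def by simp
        then obtain w where w: "w \<in> D i" "w \<notin> D (Suc i)" and xw: "x \<in> Mvw (D i) E v w" using x by auto
        have wv: "w \<noteq> v" using w Dv by auto
        have wV: "w \<in> V" using w DV by auto
        have lw: "lev w = i" using levI[OF wv w] .
        have "Mvw V E v w = Mvw (D i) E v w" using Mvw_transfer[OF Dm Dv w(1)] .
        then have "x \<in> Mvw V E v w" using xw by simp
        then show "x \<in> {v} \<union> \<Union> {Mvw V E v w | w. w \<in> V \<and> lev w = i}" using wV lw by blast
      qed
      show "{v} \<union> \<Union> {Mvw V E v w | w. w \<in> V \<and> lev w = i} \<subseteq> D i"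
        using Dv MMsub by blast
    qed
  next
    case False
    then have Di: "D i = {v}" using ged by simp
    have "Mvw V E v w \<subseteq> {v}" if "w \<in> V" "lev w = i" for w
    proof -
      have "w = v" using levd[OF that(1)] that(2) False by auto
      then show ?thesis using MMv by simp
    qed
    then have "\<Union> {Mvw V E v w | w. w \<in> V \<and> lev w = i} \<subseteq> {v}" by blast
    then show ?thesis using Di by blast
  qed
  show ?thesis using main Sset_eq unfolding D_def by simp
qed

end
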